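(* Let $a=(w_1,\dots,w_n)$ be a weak CLT sentence in which every $w_i$ is a closed word with first letter $1$. Then $\mathrm{wt}(a)\le 1+\sum_{i=1}^n\frac{\ell(w_i)-2}{2}$.
   Context: A word is a finite sequence $w=(s_1,\dots,s_m)$ of positive integers; $\ell(w)=m$; closed means $s_1=s_m$. Its edges are $E_w=\{\{s_i,s_{i+1}\}:1\le i\le m-1\}$ (undirected, self edges allowed), and $N_e^w=\#\{i\le m-1:\{s_i,s_{i+1}\}=e\}$. A sentence is a finite sequence $a=(w_1,\dots,w_n)$ of words; $\mathrm{wt}(a)$ is the number of distinct letters appearing in $a$, $E_a=\bigcup_i E_{w_i}$, $N_e^a=\sum_iN_e^{w_i}$. $a$ is a weak CLT sentence if (S1) $N_e^a\ge2$ for all $e\in E_a$ and (S2) for every $i$ there is $j\ne i$ with $E_{w_i}\cap E_{w_j}\ne\emptyset$. *)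

theory Defs
  imports Main "HOL.Real"
begin

type_synonym word = "nat list"
type_synonym sentence = "word list"

definition is_word :: "word \<Rightarrow> bool" where
  "is_word w \<longleftrightarrow> (\<forall>s\<in>set w. 0 < s)"

definition closed_word :: "word \<Rightarrow> bool" where
  "closed_word w \<longleftrightarrow> w \<noteq> [] \<and> hd w = last w"

text \<open>Edges of a word: undirected, self edges allowed (as singleton sets).\<close>
definition word_edges :: "word \<Rightarrow> nat set set" where
  "word_edges w = {{w ! i, w ! (Suc i)} | i. Suc i < length w}"

definition word_edge_count :: "word \<Rightarrow> nat set \<Rightarrow> nat" where
  "word_edge_count w e = card {i. Suc i < length w \<and> {w ! i, w ! (Suc i)} = e}"

definition sentence_letters :: "sentence \<Rightarrow> nat set" where
  "sentence_letters a = (\<Union>w\<in>set a. set w)"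

definition wt :: "sentence \<Rightarrow> nat" where
  "wt a = card (sentence_letters a)"

definition sentence_edges :: "sentence \<Rightarrow> nat set set" where
  "sentence_edges a = (\<Union>w\<in>set a. word_edges w)"

definition sentence_edge_count :: "sentence \<Rightarrow> nat set \<Rightarrow> nat" where
  "sentence_edge_count a e = (\<Sum>i<length a. word_edge_count (a ! i) e)"

definition weak_CLT_sentence :: "sentence \<Rightarrow> bool" where
  "weak_CLT_sentence a \<longleftrightarrow>
     (\<forall>e\<in>sentence_edges a. sentence_edge_count a e \<ge> 2) \<and>
     (\<forall>i<length a. \<exists>j<length a. j \<noteq> i \<and> word_edges (a ! i) \<inter> word_edges (a ! j) \<noteq> {})"

end

theory Submission
  imports Defs
begin

fun steps :: "nat list \<Rightarrow> (nat \<times> nat) list" where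
  "steps (x # y # zs) = (x, y) # steps (y # zs)"
| "steps _ = []"

lemma steps_Cons: "steps (x # xs) = (if xs = [] then [] else (x, hd xs) # steps xs)"
  by (cases xs) auto

lemma length_steps: "length (steps w) = length w - 1"
  by (induction w rule: steps.induct) auto

lemma nth_steps: "i < length w - 1 \<Longrightarrow> steps w ! i = (w ! i, w ! Suc i)"
proof (induction w arbitrary: i rule: steps.induct)
  case (1 x y zs)
  then show ?case by (cases i) auto
qed auto

lemma steps_append: "steps (xs @ y # ys) = steps (xs @ [y]) @ steps (y # ys)"
proof (induction xs)
  case Nil then show ?case by simp
next
  case (Cons x xs) then show ?case by (cases xs) (auto simp: steps_Cons)
qed

lemma steps_set: "(x, y) \<in> set (steps w) \<Longrightarrow> x \<in> set w \<and> y \<in> set w"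
  by (induction w rule: steps.induct) auto

lemma wec_steps: "word_edge_count w e = length (filter (\<lambda>(x,y). {x,y} = e) (steps w))"
proof -
  have "{i. i < length (steps w) \<and> (\<lambda>(x,y). {x,y} = e) (steps w ! i)}
      = {i. Suc i < length w \<and> {w ! i, w ! (Suc i)} = e}"
    by (auto simp: length_steps nth_steps)
  then show ?thesis unfolding word_edge_count_def length_filter_conv_card by simp
qed

lemma we_steps: "word_edges w = (\<lambda>(x,y). {x,y}) ` set (steps w)"
proof -
  have "word_edges w = (\<lambda>i. (\<lambda>(x,y). {x,y}) (steps w ! i)) ` {i. i < length (steps w)}"
    unfolding word_edges_def by (auto simp: length_steps nth_steps)
  also have "\<dots> = (\<lambda>(x,y). {x,y}) ` set (steps w)"
  proof -
    have "set (steps w) = (\<lambda>i. steps w ! i) ` {i. i < length (steps w)}" by (auto simp: in_set_conv_nth image_iff) (metis)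
    then show ?thesis by (simp add: image_image)
  qed
  finally show ?thesis .
qed

lemma we_subset: "e \<in> word_edges w \<Longrightarrow> e \<subseteq> set w"
  by (auto simp: we_steps dest: steps_set)

lemma we_len: "word_edges w \<noteq> {} \<Longrightarrow> length w \<ge> 2"
  unfolding word_edges_def by auto


lemma letters_nth: "sentence_letters a = (\<Union>j<length a. set (a!j))"
  unfolding sentence_letters_def by (auto simp: in_set_conv_nth) (blast intro: nth_mem)+

lemma edges_nth: "sentence_edges a = (\<Union>j<length a. word_edges (a!j))"
  unfolding sentence_edges_def by (auto simp: in_set_conv_nth) (blast intro: nth_mem)+

lemma sum_list_nth': "sum_list (map f xs) = (\<Sum>j<length xs. f (xs!j))"
  by (induction xs) (simp_all add: sum.lessThan_Suc_shift del: sum.lessThan_Suc)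

lemma lenC: "length (concat (map butlast a)) = (\<Sum>j<length a. length (a!j) - 1)"
  by (simp add: length_concat sum_list_nth' o_def)

lemma sum_update:
  fixes f :: "nat \<Rightarrow> nat"
  assumes "i < n" "\<And>j. j < n \<Longrightarrow> j \<noteq> i \<Longrightarrow> f j = g j" "f i = g i + d"
  shows "(\<Sum>j<n. f j) = (\<Sum>j<n. g j) + d"
proof -
  have A: "(\<Sum>j<n. f j) = f i + (\<Sum>j\<in>{..<n} - {i}. f j)"
    using assms(1) by (simp add: sum.remove)
  have B: "(\<Sum>j<n. g j) = g i + (\<Sum>j\<in>{..<n} - {i}. g j)"
    using assms(1) by (simp add: sum.remove)
  have "(\<Sum>j\<in>{..<n} - {i}. f j) = (\<Sum>j\<in>{..<n} - {i}. g j)"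
    using assms(2) by (intro sum.cong) auto
  then show ?thesis using A B assms(3) by simp
qed

lemma reduce:
  assumes cl: "\<forall>w\<in>set a. closed_word w \<and> hd w = 1"
  and clt: "weak_CLT_sentence a"
  and i: "i < length a" and ai: "a!i = p @ [u,v,u] @ q"
  and vp: "v \<notin> set p" and vq: "v \<notin> set q" and vu: "v \<noteq> u"
  and vj: "\<forall>j<length a. j \<noteq> i \<longrightarrow> v \<notin> set (a!j)"
  shows "\<forall>w\<in>set (a[i := p@[u]@q]). closed_word w \<and> hd w = 1"
   "weak_CLT_sentence (a[i := p@[u]@q])"
   "wt a = Suc (wt (a[i := p@[u]@q]))"
   "length (concat (map butlast a)) = length (concat (map butlast (a[i := p@[u]@q]))) + 2"
proof -
  define w' where "w' = p@[u]@q"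
  define a' where "a' = a[i := w']"
  have len: "length a' = length a" by (simp add: a'_def)
  have nth': "\<And>j. j < length a \<Longrightarrow> a'!j = (if j = i then w' else a!j)"
    by (simp add: a'_def)
  have a'i: "a'!i = w'" using i by (simp add: a'_def)
  have stw: "steps (a!i) = steps (p@[u]) @ (u,v) # (v,u) # steps (u#q)"
    using steps_append[of p u "v#u#q"] ai by simp
  have stw': "steps w' = steps (p@[u]) @ steps (u#q)"
    using steps_append[of p u q] by (simp add: w'_def)
  have ec: "\<And>e. word_edge_count (a!i) e = word_edge_count w' e + (if e = {u,v} then 2 else 0)"
    unfolding wec_steps stw stw' by (auto simp: insert_commute)
  have eset: "word_edges (a!i) = insert {u,v} (word_edges w')"
    unfolding we_steps stw stw' by (auto simp: insert_commute)
  have vw': "v \<notin> set w'" using vp vq vu by (simp add: w'_def)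
  have vall: "\<And>j. j < length a \<Longrightarrow> v \<notin> set (a'!j)"
    using vw' vj nth' by auto
  have uvnot: "\<And>j. j < length a \<Longrightarrow> {u,v} \<notin> word_edges (a'!j)"
    using vall we_subset by blast
  have edj: "\<And>j. j < length a \<Longrightarrow> word_edges (a'!j) \<subseteq> word_edges (a!j)"
    using nth' eset by auto
  have sec: "\<And>e. sentence_edge_count a e = sentence_edge_count a' e + (if e = {u,v} then 2 else 0)"
    unfolding sentence_edge_count_def len
    by (rule sum_update[OF i]) (auto simp: nth' ec a'i)
  have S1: "\<forall>e\<in>sentence_edges a. sentence_edge_count a e \<ge> 2"
   and S2: "\<forall>k<length a. \<exists>j<length a. j \<noteq> k \<and> word_edges (a ! k) \<inter> word_edges (a ! j) \<noteq> {}"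
    using clt unfolding weak_CLT_sentence_def by auto
  have "weak_CLT_sentence a'"
    unfolding weak_CLT_sentence_def
  proof (intro conjI ballI allI impI)
    fix e assume e: "e \<in> sentence_edges a'"
    then obtain j where j: "j < length a" "e \<in> word_edges (a'!j)"
      by (auto simp: edges_nth len)
    then have "e \<noteq> {u,v}" using uvnot by auto
    moreover have "e \<in> sentence_edges a" using j edj by (auto simp: edges_nth)
    ultimately show "2 \<le> sentence_edge_count a' e" using S1 sec[of e] by auto
  next
    fix k assume k: "k < length a'"
    then obtain j where j: "j < length a" "j \<noteq> k" "word_edges (a ! k) \<inter> word_edges (a ! j) \<noteq> {}"
      using S2 len by (metis)
    then obtain e where e: "e \<in> word_edges (a!k)" "e \<in> word_edges (a!j)" by auto
    have "e \<noteq> {u,v}"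
    proof
      assume "e = {u,v}"
      then have "v \<in> set (a!k)" "v \<in> set (a!j)" using e we_subset by blast+
      then show False using vj j k len by (metis)
    qed
    then have "e \<in> word_edges (a'!k)" "e \<in> word_edges (a'!j)"
      using e eset nth' j k len by auto
    then show "\<exists>j<length a'. j \<noteq> k \<and> word_edges (a' ! k) \<inter> word_edges (a' ! j) \<noteq> {}"
      using j len by (metis disjoint_iff)
  qed
  then show "weak_CLT_sentence (a[i := p@[u]@q])" by (simp add: a'_def w'_def)
  have "hd (a!i) = hd w' \<and> last (a!i) = last w'"
    using ai by (cases p; cases q) (auto simp: w'_def)
  moreover have "closed_word (a!i) \<and> hd (a!i) = 1" using cl i by auto
  ultimately have "closed_word w' \<and> hd w' = 1"
    by (auto simp: closed_word_def w'_def)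
  then show "\<forall>w\<in>set (a[i := p@[u]@q]). closed_word w \<and> hd w = 1"
    using cl by (auto simp: w'_def dest: set_update_subset_insert[THEN subsetD])
  have sw: "set (a!i) = insert v (set w')" using ai by (auto simp: w'_def)
  have L: "sentence_letters a = insert v (sentence_letters a')"
    unfolding letters_nth len
  proof (intro equalityI subsetI)
    fix x assume "x \<in> (\<Union>j<length a. set (a!j))"
    then obtain j where j: "j < length a" "x \<in> set (a!j)" by auto
    show "x \<in> insert v (\<Union>j<length a. set (a'!j))"
    proof (cases "j = i")
      case True then show ?thesis using j sw a'i by auto
    next
      case False then show ?thesis using j nth' by force
    qed
  next
    fix x assume "x \<in> insert v (\<Union>j<length a. set (a'!j))"
    then consider "x = v" | j where "j < length a" "x \<in> set (a'!j)" by auto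
    then show "x \<in> (\<Union>j<length a. set (a!j))"
    proof cases
      case 1 then show ?thesis using sw i by auto
    next
      case (2 j) then show ?thesis using sw nth'[of j] by (cases "j = i") auto
    qed
  qed
  have "v \<notin> sentence_letters a'" using vall by (auto simp: letters_nth len)
  then show "wt a = Suc (wt (a[i := p@[u]@q]))"
    unfolding wt_def L by (simp add: a'_def w'_def letters_nth)
  show "length (concat (map butlast a)) = length (concat (map butlast (a[i := p@[u]@q]))) + 2"
    unfolding lenC a'_def[symmetric] w'_def[symmetric] len
    by (rule sum_update[OF i]) (auto simp: nth' ai w'_def a'i)
qed


lemma count_concat: "count_list (concat xs) x = sum_list (map (\<lambda>ys. count_list ys x) xs)"
  by (induction xs) auto

lemma wec_zero: "v \<notin> set w \<Longrightarrow> v \<in> e \<Longrightarrow> word_edge_count w e = 0"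
  unfolding wec_steps by (auto simp: filter_empty_conv dest: steps_set)

lemma in_butlast: "x \<in> set xs \<Longrightarrow> x \<noteq> last xs \<Longrightarrow> x \<in> set (butlast xs)"
  by (metis append_butlast_last_id butlast.simps(1) in_set_butlast_appendI last_in_set
      rotate1.simps(2) set_rotate1 set_ConsD)

lemma main:
  "(\<forall>w\<in>set a. closed_word w \<and> hd w = 1) \<Longrightarrow> weak_CLT_sentence a \<Longrightarrow>
   2 * wt a + length a \<le> 2 + length (concat (map butlast a))"
proof (induction "length (concat (map butlast a))" arbitrary: a rule: less_induct)
  case less
  note cl = less.prems(1) and clt = less.prems(2)
  show ?case
  proof (cases "\<exists>i p u v q. i < length a \<and> a!i = p @ [u,v,u] @ q \<and> v \<notin> set p \<and> v \<notin> set q \<and> v \<noteq> u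
                 \<and> (\<forall>j<length a. j \<noteq> i \<longrightarrow> v \<notin> set (a!j))")
    case True
    then obtain i p u v q where H: "i < length a" "a!i = p @ [u,v,u] @ q" "v \<notin> set p" "v \<notin> set q" "v \<noteq> u"
        "\<forall>j<length a. j \<noteq> i \<longrightarrow> v \<notin> set (a!j)" by blast
    note R = reduce[OF cl clt H]
    have "2 * wt (a[i := p@[u]@q]) + length (a[i := p@[u]@q]) \<le> 2 + length (concat (map butlast (a[i := p@[u]@q])))"
      using R by (intro less.hyps) auto
    then show ?thesis using R(3,4) by simp
  next
    case False
    show ?thesis
    proof (cases "a = []")
      case True then show ?thesis by (simp add: wt_def sentence_letters_def)
    next
      case ne: False
      define n where "n = length a"
      define C where "C = concat (map butlast a)"
      define L where "L = sentence_letters a"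
      have S1: "\<forall>e\<in>sentence_edges a. sentence_edge_count a e \<ge> 2"
       and S2: "\<forall>k<length a. \<exists>j<length a. j \<noteq> k \<and> word_edges (a ! k) \<inter> word_edges (a ! j) \<noteq> {}"
        using clt unfolding weak_CLT_sentence_def by auto
      have len2: "\<And>j. j < n \<Longrightarrow> length (a!j) \<ge> 2"
        using S2 we_len unfolding n_def by (metis inf_bot_left)
      have clj: "\<And>j. j < n \<Longrightarrow> hd (a!j) = 1 \<and> last (a!j) = 1 \<and> a!j \<noteq> []"
        using cl unfolding n_def closed_word_def by (metis nth_mem)
      have finL: "finite L" unfolding L_def letters_nth by auto
      have oneL: "1 \<in> L" using clj[of 0] ne unfolding L_def letters_nth n_def
        by (metis hd_in_set length_greater_0_conv lessThan_iff UN_iff)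
      have CL: "set C \<subseteq> L" unfolding C_def L_def sentence_letters_def
        by (auto dest: in_set_butlastD)
      have lenC: "length C = (\<Sum>v\<in>L. count_list C v)"
        using sum_count_set[OF CL finL] by simp
      have cntC: "\<And>v. count_list C v = (\<Sum>j<n. count_list (butlast (a!j)) v)"
        unfolding C_def n_def count_concat sum_list_nth' by (simp add: o_def)
      have c1: "count_list C 1 \<ge> n"
      proof -
        have "\<And>j. j < n \<Longrightarrow> 1 \<le> count_list (butlast (a!j)) 1"
        proof -
          fix j assume j: "j < n"
          have "hd (a!j) \<in> set (butlast (a!j))"
            using len2[OF j] by (cases "a!j") (auto)
          then have "1 \<in> set (butlast (a!j))" using clj[OF j] by simp
          then show "1 \<le> count_list (butlast (a!j)) 1"
            by (metis count_list_0_iff less_one not_less)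
        qed
        then have "(\<Sum>j<n. 1) \<le> (\<Sum>j<n. count_list (butlast (a!j)) 1)"
          by (intro sum_mono) auto
        then show ?thesis unfolding cntC by simp
      qed
      have c2: "count_list C v \<ge> 2" if vL: "v \<in> L" and v1: "v \<noteq> 1" for v
      proof (rule ccontr)
        assume "\<not> 2 \<le> count_list C v"
        then have cle: "count_list C v \<le> 1" by simp
        obtain j where j: "j < n" "v \<in> set (a!j)" using vL unfolding L_def letters_nth n_def by auto
        have vbj: "v \<in> set (butlast (a!j))" using in_butlast[OF j(2)] clj[OF j(1)] v1 by simp
        then have cj: "count_list (butlast (a!j)) v \<ge> 1"
          by (metis count_list_0_iff less_one not_less)
        have "(\<Sum>k<n. count_list (butlast (a!k)) v) = count_list (butlast (a!j)) v + (\<Sum>k\<in>{..<n}-{j}. count_list (butlast (a!k)) v)"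
          using j(1) by (simp add: sum.remove)
        then have cj1: "count_list (butlast (a!j)) v = 1"
          and oth: "(\<Sum>k\<in>{..<n}-{j}. count_list (butlast (a!k)) v) = 0"
          using cle cj cntC[of v] by linarith+
        have vk: "\<forall>k<n. k \<noteq> j \<longrightarrow> v \<notin> set (a!k)"
        proof (intro allI impI)
          fix k assume k: "k < n" "k \<noteq> j"
          have "count_list (butlast (a!k)) v = 0" using oth k by simp
          then have "v \<notin> set (butlast (a!k))" by (simp add: count_list_0_iff)
          then show "v \<notin> set (a!k)" using in_butlast clj[OF k(1)] v1 by metis
        qed
        have "a!j = butlast (a!j) @ [last (a!j)]" using clj[OF j(1)] by (metis append_butlast_last_id)
        then have "count_list (a!j) v = 1" using cj1 clj[OF j(1)] v1
          by (metis count_list_append count_list.simps add_0_right)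
        then obtain pre rest where pr: "a!j = pre @ v # rest" "v \<notin> set pre" "count_list rest v = 0"
          using count_list_Suc_split_first[of "a!j" v 0] by auto
        have vr: "v \<notin> set rest" using pr(3) by (simp add: count_list_0_iff)
        have "pre \<noteq> []" using pr(1) clj[OF j(1)] v1 by auto
        then obtain p u where pu: "pre = p @ [u]" by (metis rev_exhaust)
        have "rest \<noteq> []" using pr(1) clj[OF j(1)] v1 by auto
        then obtain u' q where uq: "rest = u' # q" by (metis list.exhaust)
        have aj: "a!j = p @ [u] @ v # u' # q" using pr pu uq by simp
        have vu: "v \<noteq> u" using pr(2) pu by auto
        have vu': "v \<noteq> u'" using vr uq by auto
        show False
        proof (cases "u = u'")
          case True
          have "v \<notin> set p" "v \<notin> set q" using pr(2) pu vr uq by auto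
          then show False using False j(1) aj True vu vk unfolding n_def by (metis append_Cons append_Nil)
        next
          case uu: False
          have st: "steps (a!j) = steps (p@[u]) @ (u,v) # (v,u') # steps (u'#q)"
            using steps_append[of p u "v#u'#q"] aj by simp
          have n1: "\<forall>(x,y)\<in>set (steps (p@[u])). {x,y} \<noteq> {u,v}"
            using pr(2) pu by (force dest: steps_set)
          have n2: "\<forall>(x,y)\<in>set (steps (u'#q)). {x,y} \<noteq> {u,v}"
            using vr uq by (force dest: steps_set)
          have "{v,u'} \<noteq> {u,v}" using uu vu' by (auto simp: doubleton_eq_iff)
          then have wj: "word_edge_count (a!j) {u,v} = 1"
            unfolding wec_steps st using n1 n2
            by (simp add: filter_empty_conv[THEN iffD2] del: filter_empty_conv)
               (simp add: filter_empty_conv case_prod_beta)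
          have "sentence_edge_count a {u,v} = (\<Sum>k<n. 0) + 1"
            unfolding sentence_edge_count_def n_def[symmetric]
            by (rule sum_update[OF j(1)]) (use vk wec_zero wj in auto)
          moreover have "{u,v} \<in> sentence_edges a"
            unfolding edges_nth we_steps using j(1) st unfolding n_def by force
          ultimately show False using S1 by force
        qed
      qed
      have "(\<Sum>v\<in>L. (if v = 1 then n else 2)) \<le> (\<Sum>v\<in>L. count_list C v)"
        using c1 c2 by (intro sum_mono) auto
      moreover have "(\<Sum>v\<in>L. (if v = 1 then n else 2)) = n + 2 * (card L - 1)"
      proof -
        have "(\<Sum>v\<in>L. (if v = 1 then n else 2)) = n + (\<Sum>v\<in>L-{1}. (if v = 1 then n else 2))"
          using finL oneL by (simp add: sum.remove)
        also have "(\<Sum>v\<in>L-{1}. (if v = 1 then n else 2)) = (\<Sum>v\<in>L-{1}. 2)"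
          by (intro sum.cong) auto
        finally show ?thesis using finL oneL by simp
      qed
      moreover have "card L \<ge> 1" using finL oneL by (metis card_0_eq empty_iff less_one not_less)
      ultimately show ?thesis unfolding lenC wt_def L_def[symmetric] C_def[symmetric] n_def[symmetric]
        by linarith
    qed
  qed
qed


theorem mainTheorem4:
  fixes a :: sentence
  assumes "\<forall>w\<in>set a. is_word w"
    and "weak_CLT_sentence a"
    and "\<forall>w\<in>set a. closed_word w \<and> hd w = 1"
  shows "real (wt a) \<le> 1 + (\<Sum>i<length a. (real (length (a ! i)) - 2) / 2)"
proof -
  define n where "n = length a"
  define s where "s = (\<lambda>j. real (length (a!j)))"
  have M: "2 * wt a + n \<le> 2 + (\<Sum>j<n. length (a!j) - 1)"
    using main[OF assms(3,2)] by (simp add: lenC n_def)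
  have ge1: "1 \<le> length (a!j)" if j: "j < n" for j
  proof -
    have "a!j \<in> set a" using j by (simp add: n_def)
    then have "a!j \<noteq> []" using assms(3) by (auto simp: closed_word_def)
    then show ?thesis by (cases "a!j") auto
  qed
  have E1: "real (\<Sum>j<n. length (a!j) - 1) = (\<Sum>j<n. s j - 1)"
    unfolding of_nat_sum s_def
  proof (intro sum.cong refl)
    fix x assume "x \<in> {..<n}"
    then have "1 \<le> length (a!x)" using ge1 by simp
    then show "real (length (a ! x) - 1) = real (length (a ! x)) - 1" by (simp add: of_nat_diff)
  qed
  have E2: "(\<Sum>j<n. s j - 1) = (\<Sum>j<n. s j) - real n"
    by (simp add: sum_subtractf)
  have E3: "(\<Sum>j<n. (s j - 2) / 2) = ((\<Sum>j<n. s j) - 2 * real n) / 2"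
    by (simp add: sum_divide_distrib[symmetric] sum_subtractf)
  have M': "2 * real (wt a) + real n \<le> 2 + real (\<Sum>j<n. length (a!j) - 1)"
  proof -
    have "real (2 * wt a + n) \<le> real (2 + (\<Sum>j<n. length (a!j) - 1))"
      using M by (simp only: of_nat_le_iff)
    then show ?thesis by simp
  qed
  have "real (wt a) \<le> 1 + (\<Sum>j<n. (s j - 2) / 2)"
  proof -
    have F: "2 * real (wt a) + real n \<le> 2 + (sum s {..<n} - real n)" using M' unfolding E1 E2 .
    show ?thesis unfolding E3 using F by (simp add: field_simps)
  qed
  then show ?thesis unfolding s_def n_def .
qed

end
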